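(* Assume the CFL condition, let $k\in\mathbb R$, and let $\eta_i^n=|U_i^n-k|$ and $Q_i^n=\hat f(U_i^n\vee k,U_{i+1}^n\vee k)-\hat f(U_i^n\wedge k,U_{i+1}^n\wedge k)$. Then for all $i,n$, $$\eta_i^{n+1}-\eta_i^n+\Delta t\,D_-Q_i^n-\Delta t\,D_-D_+|A(U_i^n)-A(k)|\le\Delta t\,\operatorname{sgn}(U_i^{n+1}-k)\,b\,\mathcal L\langle U^n\rangle_i .$$
   Context: Let $f,a:\mathbb R\to\mathbb R$ be Lipschitz, $a\ge0$ bounded, $f(0)=0$, $A(u)=\int_0^ua(s)ds$, $b\ge0$, $\lambda\in(0,1)$, $c_\lambda>0$, $\mathcal L[u](x)=c_\lambda\int_{|z|>0}\frac{u(x+z)-u(x)}{|z|^{1+\lambda}}dz$. Let $\hat f:\mathbb R^2\to\mathbb R$ be $C^1$ and Lipschitz, consistent ($\hat f(u,u)=f(u)$), nondecreasing in its first and nonincreasing in its second argument. Grid: $x_i=i\Delta x$, $I_i=[x_i,x_{i+1})$, $t_n=n\Delta t$. Weights $G^i_j=\int_{I_i}\mathcal L[\mathbf 1_{I_j}](x)dx$; these satisfy $G^i_j\ge0$ for $i\ne j$, $\sum_j|G^i_j|<\infty$, $\sum_iG^i_j=\sum_jG^i_j=0$, $G^i_j=G^j_i$, $G^{i+1}_{j+1}=G^i_j$, and $G^i_i=-d_\lambda\Delta x^{1-\lambda}$ with $d_\lambda=c_\lambda\big(\int_{|z|<1}|z|^{-\lambda}dz+\int_{|z|>1}|z|^{-1-\lambda}dz\big)$.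 $D_\pm U_i=\pm(U_{i\pm1}-U_i)/\Delta x$, $\mathcal L\langle U\rangle_i=\frac1{\Delta x}\sum_jG^i_jU_j$. Scheme: $U_i^{n+1}=U_i^n-\Delta t\,D_-\big[\hat f(U_i^n,U_{i+1}^n)-D_+A(U_i^n)\big]+\Delta t\,b\,\mathcal L\langle U^n\rangle_i$, $U^0_i=\frac1{\Delta x}\int_{I_i}u_0$ with $u_0\in L^1(\mathbb R)\cap BV(\mathbb R)$. CFL condition: $\frac{\Delta t}{\Delta x}(\|\partial_{1}\hat f\|_\infty+\|\partial_{2}\hat f\|_\infty)+\frac{2\Delta t}{\Delta x^2}\|a\|_\infty+b\,d_\lambda\frac{\Delta t}{\Delta x^\lambda}\le1$. $x\vee y=\max\{x,y\}$, $x\wedge y=\min\{x,y\}$; $\operatorname{sgn}$ is the sign function (any value in $[-1,1]$ at $0$). *)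

theory Defs
  imports "HOL-Analysis.Analysis"
begin

text \<open>Primitive of the diffusion coefficient: A(u) = int_0^u a(s) ds (oriented).\<close>
definition Aint :: "(real \<Rightarrow> real) \<Rightarrow> real \<Rightarrow> real" where
  "Aint a u = interval_lebesgue_integral lborel (ereal 0) (ereal u) a"

definition frac_lap :: "real \<Rightarrow> real \<Rightarrow> (real \<Rightarrow> real) \<Rightarrow> real \<Rightarrow> real" where
  "frac_lap c lam w x =
     c * set_lebesgue_integral lborel {z. 0 < \<bar>z\<bar>} (\<lambda>z. (w (x + z) - w x) / \<bar>z\<bar> powr (1 + lam))"

definition cell :: "real \<Rightarrow> int \<Rightarrow> real set" where
  "cell dx i = {real_of_int i * dx ..< real_of_int (i + 1) * dx}"

definition weight :: "real \<Rightarrow> real \<Rightarrow> real \<Rightarrow> int \<Rightarrow> int \<Rightarrow> real" where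
  "weight c lam dx i j =
     set_lebesgue_integral lborel (cell dx i) (frac_lap c lam (indicator (cell dx j)))"

definition lap_disc :: "real \<Rightarrow> real \<Rightarrow> real \<Rightarrow> (int \<Rightarrow> real) \<Rightarrow> int \<Rightarrow> real" where
  "lap_disc c lam dx V i = (1 / dx) * infsum (\<lambda>j. weight c lam dx i j * V j) UNIV"

definition dlam :: "real \<Rightarrow> real \<Rightarrow> real" where
  "dlam c lam = c * (set_lebesgue_integral lborel {z. \<bar>z\<bar> < 1} (\<lambda>z. \<bar>z\<bar> powr (- lam))
                   + set_lebesgue_integral lborel {z. 1 < \<bar>z\<bar>} (\<lambda>z. \<bar>z\<bar> powr (- 1 - lam)))"

definition Dminus :: "real \<Rightarrow> (int \<Rightarrow> real) \<Rightarrow> int \<Rightarrow> real" where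
  "Dminus dx W i = (W i - W (i - 1)) / dx"

definition Dplus :: "real \<Rightarrow> (int \<Rightarrow> real) \<Rightarrow> int \<Rightarrow> real" where
  "Dplus dx W i = (W (i + 1) - W i) / dx"

text \<open>The numerical scheme; U n i = U_i^n.\<close>
primrec scheme :: "(real \<Rightarrow> real \<Rightarrow> real) \<Rightarrow> (real \<Rightarrow> real) \<Rightarrow> real \<Rightarrow> real \<Rightarrow> real
    \<Rightarrow> real \<Rightarrow> real \<Rightarrow> (real \<Rightarrow> real) \<Rightarrow> nat \<Rightarrow> int \<Rightarrow> real" where
  "scheme fh a b c lam dx dt u0 0 =
     (\<lambda>i. (1 / dx) * set_lebesgue_integral lborel (cell dx i) u0)"
| "scheme fh a b c lam dx dt u0 (Suc n) =
     (let V = scheme fh a b c lam dx dt u0 n in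
      (\<lambda>i. V i - dt * Dminus dx (\<lambda>j. fh (V j) (V (j + 1)) - Dplus dx (\<lambda>m. Aint a (V m)) j) i
             + dt * b * lap_disc c lam dx V i))"

definition bounded_pvar :: "(real \<Rightarrow> real) \<Rightarrow> bool" where
  "bounded_pvar v = (\<exists>M. \<forall>xs. sorted xs \<longrightarrow>
       (\<Sum>k < length xs - 1. \<bar>v (xs ! (k + 1)) - v (xs ! k)\<bar>) \<le> M)"

definition BV :: "(real \<Rightarrow> real) \<Rightarrow> bool" where
  "BV u = (\<exists>v. (AE x in lborel. u x = v x) \<and> bounded_pvar v)"

end

theory Submission imports Defs begin

lemma partial1:
  assumes d: "\<forall>x y. ((\<lambda>p. fh (fst p) (snd p)) has_derivative
                       (\<lambda>h. fh1 x y * fst h + fh2 x y * snd h)) (at (x, y))"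
  shows "((\<lambda>t. fh t y) has_real_derivative fh1 x y) (at x)"
proof -
  have 1: "((\<lambda>t. (t,y)) has_derivative (\<lambda>h. (h,0))) (at x)"
    by (auto intro!: derivative_eq_intros)
  have "((\<lambda>t. fh (fst (t,y)) (snd (t,y))) has_derivative
      (\<lambda>h. fh1 x y * fst (h,0::real) + fh2 x y * snd (h,0::real))) (at x)"
    using has_derivative_compose[OF 1, of "\<lambda>p. fh (fst p) (snd p)"] d[rule_format, of x y] by blast
  then show ?thesis unfolding has_field_derivative_def by (simp add: mult.commute[of _ "fh1 x y"] mult.commute[of _ "fh2 x y"])
qed

lemma partial2:
  assumes d: "\<forall>x y. ((\<lambda>p. fh (fst p) (snd p)) has_derivative
                       (\<lambda>h. fh1 x y * fst h + fh2 x y * snd h)) (at (x, y))"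
  shows "((\<lambda>t. fh x t) has_real_derivative fh2 x y) (at y)"
proof -
  have 1: "((\<lambda>t. (x,t)) has_derivative (\<lambda>h. (0,h))) (at y)"
    by (auto intro!: derivative_eq_intros)
  have "((\<lambda>t. fh (fst (x,t)) (snd (x,t))) has_derivative
      (\<lambda>h. fh1 x y * fst (0::real,h) + fh2 x y * snd (0::real,h))) (at y)"
    using has_derivative_compose[OF 1, of "\<lambda>p. fh (fst p) (snd p)"] d[rule_format, of x y] by blast
  then show ?thesis unfolding has_field_derivative_def by (simp add: mult.commute[of _ "fh1 x y"] mult.commute[of _ "fh2 x y"])
qed

lemma deriv_bound:
  fixes g :: "real \<Rightarrow> real"
  assumes "(g has_real_derivative D) (at x)" and "\<And>u v. \<bar>g u - g v\<bar> \<le> L * \<bar>u - v\<bar>"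
  shows "\<bar>D\<bar> \<le> L"
proof -
  have lim: "((\<lambda>h. (g (x + h) - g x) / h) \<longlongrightarrow> D) (at 0)" using assms(1) by (simp add: DERIV_def)
  have "eventually (\<lambda>h. norm ((g (x + h) - g x) / h) \<le> L) (at 0)"
  proof (rule eventually_at_topological[THEN iffD2], intro exI[of _ UNIV] conjI ballI impI; simp?)
    fix h :: real assume "h \<noteq> 0"
    have "\<bar>g (x + h) - g x\<bar> \<le> L * \<bar>h\<bar>" using assms(2)[of "x+h" x] by simp
    then show "\<bar>g (x + h) - g x\<bar> / \<bar>h\<bar> \<le> L" using \<open>h \<noteq> 0\<close> by (simp add: divide_le_eq)
  qed
  from Lim_norm_ubound[OF _ lim this] show ?thesis by simp
qed

lemma Aint_deriv:
  assumes "continuous_on UNIV a"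
  shows "((Aint a) has_real_derivative a x) (at x)"
proof -
  have "(at x within {min 0 (x - 1)..max 0 (x + 1)}) = at x"
    by (intro at_within_interior) auto
  moreover have "min 0 (x - 1) \<le> x" "x \<le> max 0 (x + 1)"
    by auto
  ultimately show ?thesis
    using interval_integral_FTC2[of "min 0 (x - 1)" 0 "max 0 (x + 1)" a x] assms
    by (auto simp: Aint_def[abs_def] zero_ereal_def continuous_on_subset
                   has_real_derivative_iff_has_vector_derivative
             split del: if_split)
qed

theorem mainTheorem10:
  fixes f a :: "real \<Rightarrow> real" and fh fh1 fh2 :: "real \<Rightarrow> real \<Rightarrow> real"
    and b c lam dx dt k :: real and u0 :: "real \<Rightarrow> real"
  assumes f_lip: "\<exists>L. L-lipschitz_on UNIV f" and f0: "f 0 = 0"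
    and a_lip: "\<exists>L. L-lipschitz_on UNIV a" and a_nonneg: "\<forall>s. 0 \<le> a s"
    and a_bdd: "bounded (range a)"
    and b_nonneg: "0 \<le> b" and lam_pos: "0 < lam" and lam_lt1: "lam < 1" and c_pos: "0 < c"
    and fh_deriv: "\<forall>x y. ((\<lambda>p. fh (fst p) (snd p)) has_derivative
                       (\<lambda>h. fh1 x y * fst h + fh2 x y * snd h)) (at (x, y))"
    and fh1_cont: "continuous_on UNIV (\<lambda>p. fh1 (fst p) (snd p))"
    and fh2_cont: "continuous_on UNIV (\<lambda>p. fh2 (fst p) (snd p))"
    and fh_lip: "\<exists>L. L-lipschitz_on UNIV (\<lambda>p. fh (fst p) (snd p))"
    and fh_cons: "\<forall>u. fh u u = f u"
    and fh_mono1: "\<forall>x x' y. x \<le> x' \<longrightarrow> fh x y \<le> fh x' y"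
    and fh_mono2: "\<forall>x y y'. y \<le> y' \<longrightarrow> fh x y' \<le> fh x y"
    and dx_pos: "0 < dx" and dt_pos: "0 < dt"
    and u0_L1: "integrable lborel u0" and u0_BV: "BV u0"
    and CFL: "dt / dx * ((SUP p. \<bar>fh1 (fst p) (snd p)\<bar>) + (SUP p. \<bar>fh2 (fst p) (snd p)\<bar>))
              + 2 * dt / dx\<^sup>2 * (SUP s. \<bar>a s\<bar>) + b * dlam c lam * dt / dx powr lam \<le> 1"
  shows "\<forall>n i s.
     (let U = scheme fh a b c lam dx dt u0;
          eta = (\<lambda>m j. \<bar>U m j - k\<bar>);
          Q = (\<lambda>j. fh (max (U n j) k) (max (U n (j + 1)) k)
                   - fh (min (U n j) k) (min (U n (j + 1)) k))
      in (U (Suc n) i - k \<noteq> 0 \<longrightarrow> s = sgn (U (Suc n) i - k)) \<and> \<bar>s\<bar> \<le> 1 \<longrightarrow>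
         eta (Suc n) i - eta n i + dt * Dminus dx Q i
           - dt * Dminus dx (Dplus dx (\<lambda>j. \<bar>Aint a (U n j) - Aint a k\<bar>)) i
         \<le> dt * s * b * lap_disc c lam dx (U n) i)"
  proof (intro allI)
  fix n i s
  define A where "A = Aint a"
  define S1 where "S1 = (SUP p. \<bar>fh1 (fst p) (snd p)\<bar>)"
  define S2 where "S2 = (SUP p. \<bar>fh2 (fst p) (snd p)\<bar>)"
  define M where "M = (SUP s. \<bar>a s\<bar>)"
  obtain L where L: "L-lipschitz_on UNIV (\<lambda>p. fh (fst p) (snd p))" using fh_lip by blast
  have lip1: "\<bar>fh u y - fh v y\<bar> \<le> L * \<bar>u - v\<bar>" for u v y
    using lipschitz_onD[OF L, of "(u,y)" "(v,y)"] by (simp add: dist_Pair_Pair dist_real_def)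
  have lip2: "\<bar>fh x u - fh x v\<bar> \<le> L * \<bar>u - v\<bar>" for u v x
    using lipschitz_onD[OF L, of "(x,u)" "(x,v)"] by (simp add: dist_Pair_Pair dist_real_def)
  have d1: "((\<lambda>t. fh t y) has_real_derivative fh1 x y) (at x)" for x y
    using partial1[OF fh_deriv] .
  have d2: "((\<lambda>t. fh x t) has_real_derivative fh2 x y) (at y)" for x y
    using partial2[OF fh_deriv] .
  have b1: "\<bar>fh1 x y\<bar> \<le> L" for x y
    using deriv_bound[OF d1 lip1] .
  have b2: "\<bar>fh2 x y\<bar> \<le> L" for x y
    using deriv_bound[OF d2 lip2] .
  have S1b: "\<bar>fh1 x y\<bar> \<le> S1" for x y
    unfolding S1_def
    using cSUP_upper[of "(x,y)" UNIV "\<lambda>p. \<bar>fh1 (fst p) (snd p)\<bar>"] b1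
    by (auto simp: bdd_above_def)
  have S2b: "\<bar>fh2 x y\<bar> \<le> S2" for x y
    unfolding S2_def
    using cSUP_upper[of "(x,y)" UNIV "\<lambda>p. \<bar>fh2 (fst p) (snd p)\<bar>"] b2
    by (auto simp: bdd_above_def)
  obtain La where La: "La-lipschitz_on UNIV a" using a_lip by blast
  have acont: "continuous_on UNIV a" using lipschitz_on_continuous_on[OF La] .
  have dA: "(A has_real_derivative a x) (at x)" for x
    unfolding A_def using Aint_deriv[OF acont] .
  obtain B where B: "\<And>s. \<bar>a s\<bar> \<le> B" using a_bdd by (auto simp: bounded_iff)
  have Mb: "a x \<le> M" for x
    unfolding M_def
    using cSUP_upper[of x UNIV "\<lambda>s. \<bar>a s\<bar>"] B
    by (force simp: bdd_above_def)
  have m1: "fh q r - fh q' r \<le> S1 * (q - q')" if "q' \<le> q" for q q' r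
  proof (cases "q' = q")
    case False
    then have "q' < q" using that by simp
    from MVT2[OF this, of "\<lambda>t. fh t r" "\<lambda>t. fh1 t r"] d1
    obtain z where "fh q r - fh q' r = (q - q') * fh1 z r" by blast
    moreover have "(q - q') * fh1 z r \<le> (q - q') * S1"
      using S1b[of z r] that by (intro mult_left_mono) auto
    ultimately show ?thesis by (simp add: mult.commute)
  qed simp
  have m2: "fh p q' - fh p q \<le> S2 * (q - q')" if "q' \<le> q" for p q q'
  proof (cases "q' = q")
    case False
    then have "q' < q" using that by simp
    from MVT2[OF this, of "\<lambda>t. fh p t" "\<lambda>t. fh2 p t"] d2
    obtain z where "fh p q - fh p q' = (q - q') * fh2 p z" by blast
    moreover have "(q - q') * (- fh2 p z) \<le> (q - q') * S2"
      using S2b[of p z] that by (intro mult_left_mono) auto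
    ultimately show ?thesis by (simp add: mult.commute)
  qed simp
  have mA: "0 \<le> A q - A q' \<and> A q - A q' \<le> M * (q - q')" if "q' \<le> q" for q q'
  proof (cases "q' = q")
    case False
    then have "q' < q" using that by simp
    from MVT2[OF this, of A a] dA
    obtain z where "A q - A q' = (q - q') * a z" by blast
    moreover have "(q - q') * a z \<le> (q - q') * M"
      using Mb[of z] that by (intro mult_left_mono) auto
    moreover have "0 \<le> (q - q') * a z" using a_nonneg that by simp
    ultimately show ?thesis by (simp add: mult.commute)
  qed simp
  have dlam_nn: "0 \<le> dlam c lam"
    unfolding dlam_def set_lebesgue_integral_def
    using c_pos by (intro mult_nonneg_nonneg add_nonneg_nonneg integral_nonneg) (auto simp: indicator_def)
  have extra: "0 \<le> b * dlam c lam * dt / dx powr lam"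
    using b_nonneg dlam_nn dt_pos dx_pos by simp
  have CFL': "dt / dx * (S1 + S2) + 2 * dt / dx\<^sup>2 * M \<le> 1"
    using CFL extra unfolding S1_def S2_def M_def by linarith
  define H where "H p q r = q - dt/dx*(fh q r - fh p q) + dt/dx^2*(A r - 2*A q + A p)" for p q r
  have Hk: "H k k k = k" unfolding H_def by simp
  have Hp: "H p' q r \<le> H p q r" if "p' \<le> p" for p p' q r
  proof -
    have "0 \<le> fh p q - fh p' q" using fh_mono1 that by simp
    then have "0 \<le> dt/dx * (fh p q - fh p' q)" using dt_pos dx_pos by simp
    moreover have "0 \<le> dt/dx^2 * (A p - A p')" using mA[OF that] dt_pos dx_pos by simp
    moreover have "H p q r - H p' q r = dt/dx * (fh p q - fh p' q) + dt/dx^2 * (A p - A p')"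
      using dx_pos unfolding H_def by (simp add: field_simps)
    ultimately show ?thesis by linarith
  qed
  have Hr: "H p q r' \<le> H p q r" if "r' \<le> r" for p r r' q
  proof -
    have "0 \<le> fh q r' - fh q r" using fh_mono2 that by simp
    then have "0 \<le> dt/dx * (fh q r' - fh q r)" using dt_pos dx_pos by simp
    moreover have "0 \<le> dt/dx^2 * (A r - A r')" using mA[OF that] dt_pos dx_pos by simp
    moreover have "H p q r - H p q r' = dt/dx * (fh q r' - fh q r) + dt/dx^2 * (A r - A r')"
      using dx_pos unfolding H_def by (simp add: field_simps)
    ultimately show ?thesis by linarith
  qed
  have Hq: "H p q' r \<le> H p q r" if "q' \<le> q" for p q q' r
  proof -
    define d where "d = q - q'"
    have d0: "0 \<le> d" using that d_def by simp
    define X where "X = dt/dx * ((fh q r - fh q' r) + (fh p q' - fh p q))"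
    define Y where "Y = 2*dt/dx^2 * (A q - A q')"
    define K1 where "K1 = dt/dx*(S1+S2)"
    define K2 where "K2 = 2*dt/dx^2*M"
    have "X \<le> dt/dx * ((S1 + S2) * d)"
      using m1[OF that, of r] m2[OF that, of p] dt_pos dx_pos unfolding d_def X_def
      by (intro mult_left_mono) (auto simp: algebra_simps)
    then have i1: "X \<le> K1 * d" unfolding K1_def by (simp add: mult.assoc)
    have "Y \<le> 2*dt/dx^2 * (M * d)"
      using mA[OF that] dt_pos dx_pos unfolding d_def Y_def by (intro mult_left_mono) auto
    then have i2: "Y \<le> K2 * d" unfolding K2_def by (simp add: mult.assoc)
    have "(K1 + K2) * d \<le> 1 * d"
      using CFL' d0 unfolding K1_def K2_def by (intro mult_right_mono) auto
    then have i3: "K1 * d + K2 * d \<le> d" by (simp add: distrib_right)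
    have "0 \<le> d - X - Y" using i1 i2 i3 by linarith
    moreover have "H p q r - H p q' r = d - X - Y"
      using dx_pos unfolding H_def d_def X_def Y_def by (simp add: field_simps)
    ultimately show ?thesis by linarith
  qed
  have Hmono: "H p' q' r' \<le> H p q r" if "p' \<le> p" "q' \<le> q" "r' \<le> r" for p q r p' q' r'
    using Hp[OF that(1), of q' r'] Hq[OF that(2), of p r'] Hr[OF that(3), of p q] by linarith
  define V where "V = scheme fh a b c lam dx dt u0 n"
  define p where "p = V (i - 1)"
  define q where "q = V i"
  define r where "r = V (i + 1)"
  define LL where "LL = lap_disc c lam dx V i"
  have W: "scheme fh a b c lam dx dt u0 (Suc n) i = H p q r + dt * b * LL"
    using dx_pos unfolding V_def p_def q_def r_def LL_def H_def A_def
    by (simp add: Let_def Dminus_def Dplus_def field_simps power2_eq_square)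
  have absA: "\<bar>A x - A k\<bar> = A (max x k) - A (min x k)" for x
  proof (cases "x \<le> k")
    case True then show ?thesis using mA[OF True] by (simp add: max_def min_def)
  next
    case False then have kx: "k \<le> x" by simp
    then show ?thesis using mA[OF kx] by (simp add: max_def min_def)
  qed
  have E: "\<bar>q - k\<bar> - dt * Dminus dx (\<lambda>j. fh (max (V j) k) (max (V (j + 1)) k)
                   - fh (min (V j) k) (min (V (j + 1)) k)) i
           + dt * Dminus dx (Dplus dx (\<lambda>j. \<bar>Aint a (V j) - Aint a k\<bar>)) i
        = H (max p k) (max q k) (max r k) - H (min p k) (min q k) (min r k)"
    using dx_pos unfolding Dminus_def Dplus_def H_def p_def q_def r_def A_def[symmetric] absA
    by (simp add: field_simps power2_eq_square max_def min_def)
  have lo: "H (min p k) (min q k) (min r k) \<le> H p q r"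
    and hi: "H p q r \<le> H (max p k) (max q k) (max r k)"
    and lok: "H (min p k) (min q k) (min r k) \<le> k"
    and hik: "k \<le> H (max p k) (max q k) (max r k)"
    using Hmono[of "min p k" p "min q k" q "min r k" r] Hmono[of p "max p k" q "max q k" r "max r k"]
      Hmono[of "min p k" k "min q k" k "min r k" k] Hmono[of k "max p k" k "max q k" k "max r k"] Hk
    by auto
  show "let U = scheme fh a b c lam dx dt u0;
          eta = (\<lambda>m j. \<bar>U m j - k\<bar>);
          Q = (\<lambda>j. fh (max (U n j) k) (max (U n (j + 1)) k)
                   - fh (min (U n j) k) (min (U n (j + 1)) k))
      in (U (Suc n) i - k \<noteq> 0 \<longrightarrow> s = sgn (U (Suc n) i - k)) \<and> \<bar>s\<bar> \<le> 1 \<longrightarrow>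
         eta (Suc n) i - eta n i + dt * Dminus dx Q i
           - dt * Dminus dx (Dplus dx (\<lambda>j. \<bar>Aint a (U n j) - Aint a k\<bar>)) i
         \<le> dt * s * b * lap_disc c lam dx (U n) i"
  proof (unfold Let_def V_def[symmetric] W LL_def[symmetric] q_def[symmetric], intro impI, elim conjE)
    assume sg: "H p q r + dt * b * LL - k \<noteq> 0 \<longrightarrow> s = sgn (H p q r + dt * b * LL - k)"
      and s1: "\<bar>s\<bar> \<le> 1"
    have eq: "\<bar>H p q r + dt * b * LL - k\<bar> = s * (H p q r + dt * b * LL - k)"
    proof (cases "H p q r + dt * b * LL - k = 0")
      case False then show ?thesis using sg by (simp add: sgn_mult_abs abs_sgn)
    qed simp
    have "s * (H p q r - k) \<le> \<bar>s\<bar> * \<bar>H p q r - k\<bar>"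
      by (metis abs_ge_self abs_mult)
    also have "\<dots> \<le> 1 * \<bar>H p q r - k\<bar>" using s1 by (intro mult_right_mono) auto
    finally have sH: "s * (H p q r - k) \<le> 1 * \<bar>H p q r - k\<bar>" .
    have "s * (H p q r - k) \<le> H (max p k) (max q k) (max r k) - H (min p k) (min q k) (min r k)"
    proof -
      have "\<bar>H p q r - k\<bar> \<le> H (max p k) (max q k) (max r k) - H (min p k) (min q k) (min r k)"
        unfolding abs_le_iff using lo hi lok hik by linarith
      then show ?thesis using sH by linarith
    qed
    then show "\<bar>H p q r + dt * b * LL - k\<bar> - \<bar>q - k\<bar> + dt * Dminus dx (\<lambda>j. fh (max (V j) k) (max (V (j + 1)) k)
                   - fh (min (V j) k) (min (V (j + 1)) k)) i
           - dt * Dminus dx (Dplus dx (\<lambda>j. \<bar>Aint a (V j) - Aint a k\<bar>)) i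
         \<le> dt * s * b * LL"
      using E eq by (simp add: algebra_simps)
  qed
qed

end
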